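(* Let $\mathbf{x}_1,\dots,\mathbf{x}_N\in\mathbb{R}^d$ be strictly linearly separable, i.e. there exists $\mathbf{w}_*\in\mathbb{R}^d$ with $\mathbf{w}_*^\top\mathbf{x}_n>0$ for all $n$. Let $\ell:\mathbb{R}\to\mathbb{R}$ be positive, differentiable, with $\beta$-Lipschitz derivative, $\ell'(u)<0$ for all $u$, $\lim_{u\to\infty}\ell(u)=\lim_{u\to\infty}\ell'(u)=0$, and $\limsup_{u\to-\infty}\ell'(u)\neq 0$. Let $\eta>0$ and let $B$ be a positive integer with $K=N/B$ an integer. For any starting point $\mathbf{w}(0)\in\mathbb{R}^d$, let $\mathbf{w}(t)$ be the iterates of stochastic gradient descent $$\mathbf{w}(t+1)=\mathbf{w}(t)-\frac{\eta}{B}\sum_{n\in\mathcal{B}(t)}\ell'\big(\mathbf{w}(t)^\top\mathbf{x}_n\big)\mathbf{x}_n,$$ where each minibatch $\mathcal{B}(t)\subset\{1,\dots,N\}$ consists of $B$ distinct indices and the minibatches are chosen according to either sampling regime (random sampling with replacement, or sampling without replacement) described in the context. Then $\|\mathbf{w}(t)\|\to\infty$ as $t\to\infty$.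
   Context: Sampling regimes. (Random sampling with replacement): at each iteration $t$ a minibatch $\mathcal{B}(t)$ of $B$ distinct indices is sampled randomly and uniformly (independently across iterations), so that each sample has identical probability of being selected. (Sampling without replacement): at each epoch the minibatches partition the data, i.e. for every $u\in\{0,1,2,\dots\}$, $\bigcup_{k=0}^{K-1}\mathcal{B}(Ku+k)=\{1,\dots,N\}$ (the order may be arbitrary, even adversarial). *)

theory Defs
  imports "HOL-Analysis.Analysis" "HOL-Probability.Probability"
begin

primrec sgd_iter ::
  "real \<Rightarrow> nat \<Rightarrow> (real \<Rightarrow> real) \<Rightarrow> (nat \<Rightarrow> real ^ 'd) \<Rightarrow> real ^ 'd
     \<Rightarrow> (nat \<Rightarrow> nat set) \<Rightarrow> nat \<Rightarrow> real ^ 'd" where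
  "sgd_iter eta B l' x w0 Bt 0 = w0"
| "sgd_iter eta B l' x w0 Bt (Suc t) =
     sgd_iter eta B l' x w0 Bt t
     - (eta / real B) *\<^sub>R (\<Sum>n\<in>Bt t. l' (sgd_iter eta B l' x w0 Bt t \<bullet> x n) *\<^sub>R x n)"

definition minibatches :: "nat \<Rightarrow> nat \<Rightarrow> nat set set" where
  "minibatches N B = {S. S \<subseteq> {1..N} \<and> card S = B}"

end

theory Submission
  imports Defs
begin

lemma det_part:
  fixes x :: "nat \<Rightarrow> real ^ 'd"
    and N B :: nat and l' :: "real \<Rightarrow> real" and beta eta :: real
  assumes N_pos: "0 < N"
    and sep: "\<exists>w_star :: real ^ 'd. \<forall>n\<in>{1..N}. w_star \<bullet> x n > 0"
    and l'_lip: "\<forall>u v. \<bar>l' u - l' v\<bar> \<le> beta * \<bar>u - v\<bar>"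
    and l'_neg: "\<forall>u. l' u < 0"
    and eta_pos: "eta > 0"
    and B_pos: "0 < B"
    and Bt: "\<forall>t. Bt t \<in> minibatches N B"
  shows "filterlim (\<lambda>t. norm (sgd_iter eta B l' x w0 Bt t)) at_top sequentially"
proof -
  define w where "w = sgd_iter eta B l' x w0 Bt"
  obtain ws :: "real ^ 'd" where ws: "\<forall>n\<in>{1..N}. ws \<bullet> x n > 0" using sep by blast
  define m where "m = Min ((\<lambda>n. ws \<bullet> x n) ` {1..N})"
  define X where "X = Max ((\<lambda>n. norm (x n)) ` {1..N})"
  have ne: "{1..N} \<noteq> {}" using N_pos by auto
  have m_pos: "m > 0" unfolding m_def using ws ne by (subst Min_gr_iff) auto
  have m_le: "m \<le> ws \<bullet> x n" if "n \<in> {1..N}" for n unfolding m_def using that by auto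
  have X_ge: "norm (x n) \<le> X" if "n \<in> {1..N}" for n unfolding X_def using that by auto
  have one_in: "1 \<in> {1..N}" using N_pos by simp
  have X_nn: "X \<ge> 0" using order_trans[OF norm_ge_zero X_ge[OF one_in]] .
  have Bt_fin: "finite (Bt t)" and Bt_sub: "Bt t \<subseteq> {1..N}" and Bt_card: "card (Bt t) = B" for t
    using Bt unfolding minibatches_def by (auto intro: finite_subset)
  define g where "g t = ws \<bullet> w t" for t
  define a where "a t = (\<Sum>n\<in>Bt t. - l' (w t \<bullet> x n))" for t
  have wS: "w (Suc t) = w t - (eta / real B) *\<^sub>R (\<Sum>n\<in>Bt t. l' (w t \<bullet> x n) *\<^sub>R x n)" for t
    unfolding w_def by simp
  have gS: "g (Suc t) - g t = (eta / real B) * (\<Sum>n\<in>Bt t. - l' (w t \<bullet> x n) * (ws \<bullet> x n))" for t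
    unfolding g_def wS by (simp add: inner_diff_right inner_sum_right sum_negf)
  have gS_ge: "g (Suc t) - g t \<ge> (eta / real B) * m * a t" for t
  proof -
    have "m * a t = (\<Sum>n\<in>Bt t. - l' (w t \<bullet> x n) * m)"
      unfolding a_def by (simp add: sum_distrib_left mult.commute)
    also have "\<dots> \<le> (\<Sum>n\<in>Bt t. - l' (w t \<bullet> x n) * (ws \<bullet> x n))"
      apply (intro sum_mono mult_left_mono)
      subgoal for n using m_le[OF subsetD[OF Bt_sub]] by blast
      subgoal for n using l'_neg by (simp add: less_imp_le)
      done
    finally have "m * a t \<le> (\<Sum>n\<in>Bt t. - l' (w t \<bullet> x n) * (ws \<bullet> x n))" .
    hence "(eta / real B) * (m * a t) \<le> (eta / real B) * (\<Sum>n\<in>Bt t. - l' (w t \<bullet> x n) * (ws \<bullet> x n))"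
      using eta_pos B_pos by (intro mult_left_mono) auto
    thus ?thesis unfolding gS by (simp add: mult.assoc)
  qed
  have step: "norm (w (Suc t) - w t) \<le> (eta / real B) * X * a t" for t
  proof -
    have "norm (w (Suc t) - w t) = (eta / real B) * norm (\<Sum>n\<in>Bt t. l' (w t \<bullet> x n) *\<^sub>R x n)"
      unfolding wS using eta_pos by simp
    also have "norm (\<Sum>n\<in>Bt t. l' (w t \<bullet> x n) *\<^sub>R x n) \<le> (\<Sum>n\<in>Bt t. - l' (w t \<bullet> x n) * X)"
    proof -
      have "norm (\<Sum>n\<in>Bt t. l' (w t \<bullet> x n) *\<^sub>R x n) \<le> (\<Sum>n\<in>Bt t. norm (l' (w t \<bullet> x n) *\<^sub>R x n))"
        by (rule norm_sum)
      also have "\<dots> \<le> (\<Sum>n\<in>Bt t. - l' (w t \<bullet> x n) * X)"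
      proof (rule sum_mono)
        fix n assume n: "n \<in> Bt t"
        have "norm (l' (w t \<bullet> x n) *\<^sub>R x n) = - l' (w t \<bullet> x n) * norm (x n)"
          using l'_neg by (simp add: abs_of_neg)
        also have "\<dots> \<le> - l' (w t \<bullet> x n) * X"
          using X_ge[OF subsetD[OF Bt_sub n]] l'_neg by (intro mult_left_mono) (auto simp: less_imp_le)
        finally show "norm (l' (w t \<bullet> x n) *\<^sub>R x n) \<le> - l' (w t \<bullet> x n) * X" .
      qed
      finally show ?thesis .
    qed
    hence "(eta / real B) * norm (\<Sum>n\<in>Bt t. l' (w t \<bullet> x n) *\<^sub>R x n) \<le> (eta / real B) * (\<Sum>n\<in>Bt t. - l' (w t \<bullet> x n) * X)"
      using eta_pos B_pos by (intro mult_left_mono) auto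
    also have "(\<Sum>n\<in>Bt t. - l' (w t \<bullet> x n) * X) = X * a t"
      unfolding a_def by (simp add: sum_distrib_left mult.commute)
    finally show ?thesis by (simp add: mult.assoc)
  qed
  have a_nn: "a t \<ge> 0" for t unfolding a_def using l'_neg by (simp add: sum_nonneg less_imp_le)
  have g_mono: "g t \<le> g (Suc t)" for t
  proof -
    have "0 \<le> (eta / real B) * m * a t" using eta_pos B_pos m_pos a_nn by simp
    thus ?thesis using gS_ge[of t] by linarith
  qed
  have inc: "incseq g" using g_mono by (simp add: incseq_SucI)
  have dist_bound: "norm (w t - w 0) \<le> (X / m) * (g t - g 0)" for t
  proof (induction t)
    case 0 then show ?case by simp
  next
    case (Suc t)
    have "norm (w (Suc t) - w 0) \<le> norm (w (Suc t) - w t) + norm (w t - w 0)"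
      using norm_triangle_ineq[of "w (Suc t) - w t" "w t - w 0"] by simp
    also have "norm (w (Suc t) - w t) \<le> (X / m) * (g (Suc t) - g t)"
    proof -
      have "(eta / real B) * X * a t = (X / m) * ((eta / real B) * m * a t)" using m_pos by simp
      also have "\<dots> \<le> (X / m) * (g (Suc t) - g t)"
        using gS_ge[of t] X_nn m_pos by (intro mult_left_mono) auto
      finally show ?thesis using step[of t] by linarith
    qed
    finally show ?case using Suc.IH by (simp add: algebra_simps)
  qed
  have g_lim: "filterlim g at_top sequentially"
  proof (rule ccontr)
    assume "\<not> ?thesis"
    then obtain Z where Z: "\<not> eventually (\<lambda>t. Z \<le> g t) sequentially"
      unfolding filterlim_at_top by blast
    have gZ: "g t < Z" for t
    proof (rule ccontr)
      assume "\<not> g t < Z"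
      hence "\<forall>s\<ge>t. Z \<le> g s" using incseqD[OF inc] by (meson not_less order_trans)
      hence "eventually (\<lambda>t. Z \<le> g t) sequentially" by (auto simp: eventually_sequentially)
      thus False using Z by blast
    qed
    define Rw where "Rw = norm (w 0) + (X / m) * (Z - g 0)"
    have wb: "norm (w t) \<le> Rw" for t
    proof -
      have "norm (w t) \<le> norm (w 0) + norm (w t - w 0)" using norm_triangle_ineq[of "w 0" "w t - w 0"] by simp
      also have "\<dots> \<le> norm (w 0) + (X / m) * (g t - g 0)" using dist_bound[of t] by simp
      also have "\<dots> \<le> Rw" unfolding Rw_def using gZ[of t] X_nn m_pos
        by (intro add_left_mono mult_left_mono) auto
      finally show ?thesis .
    qed
    define R where "R = Rw * X"
    have ib: "w t \<bullet> x n \<in> {-R..R}" if "n \<in> {1..N}" for t n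
    proof -
      have "\<bar>w t \<bullet> x n\<bar> \<le> norm (w t) * norm (x n)" by (rule Cauchy_Schwarz_ineq2)
      also have "\<dots> \<le> Rw * X" using wb[of t] X_ge[OF that] order_trans[OF norm_ge_zero wb[of t]] by (intro mult_mono) auto
      finally show ?thesis unfolding R_def by auto
    qed
    have "R \<ge> 0" using ib[OF one_in, of 0] by auto
    have cont: "continuous_on {-R..R} l'"
    proof -
      have "lipschitz_on \<bar>beta\<bar> UNIV l'"
        unfolding lipschitz_on_def dist_real_def
      proof (intro conjI ballI)
        fix u v :: real
        have "\<bar>l' u - l' v\<bar> \<le> beta * \<bar>u - v\<bar>" using l'_lip by blast
        also have "\<dots> \<le> \<bar>beta\<bar> * \<bar>u - v\<bar>" by (intro mult_right_mono) auto
        finally show "\<bar>l' u - l' v\<bar> \<le> \<bar>beta\<bar> * \<bar>u - v\<bar>" .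
      qed simp
      hence "continuous_on UNIV l'" by (rule lipschitz_on_continuous_on)
      thus ?thesis by (rule continuous_on_subset) auto
    qed
    obtain u0 where u0: "u0 \<in> {-R..R}" "\<forall>y\<in>{-R..R}. l' y \<le> l' u0"
      using continuous_attains_sup[OF compact_Icc _ cont] \<open>R \<ge> 0\<close> by auto
    define c where "c = - l' u0"
    have c_pos: "c > 0" unfolding c_def using l'_neg by simp
    have a_ge: "a t \<ge> B * c" for t
    proof -
      have "real B * c = (\<Sum>n\<in>Bt t. c)" using Bt_card by simp
      also have "\<dots> \<le> a t" unfolding a_def c_def
        apply (rule sum_mono)
        subgoal for n using u0(2) ib[OF subsetD[OF Bt_sub], of n t] by auto
        done
      finally show ?thesis .
    qed
    define \<delta> where "\<delta> = eta * m * c"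
    have d_pos: "\<delta> > 0" unfolding \<delta>_def using eta_pos m_pos c_pos by simp
    have incr: "g (Suc t) - g t \<ge> \<delta>" for t
    proof -
      have "\<delta> = (eta / real B) * m * (B * c)" unfolding \<delta>_def using B_pos by simp
      also have "\<dots> \<le> (eta / real B) * m * a t"
        using a_ge[of t] eta_pos m_pos by (intro mult_left_mono) auto
      finally show ?thesis using gS_ge[of t] by linarith
    qed
    have glin: "g t \<ge> g 0 + real t * \<delta>" for t
    proof (induction t)
      case 0 then show ?case by simp
    next
      case (Suc t) then show ?case using incr[of t] by (simp add: algebra_simps)
    qed
    obtain t :: nat where "t > (Z - g 0) / \<delta>" using reals_Archimedean2 by blast
    hence "real t * \<delta> > Z - g 0" using d_pos by (simp add: field_simps)
    thus False using glin[of t] gZ[of t] by linarith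
  qed
  have ws_ne: "ws \<noteq> 0" using ws one_in by fastforce
  have "filterlim (\<lambda>t. (1 / norm ws) * g t) at_top sequentially"
    by (rule filterlim_tendsto_pos_mult_at_top[OF tendsto_const _ g_lim]) (use ws_ne in simp)
  show ?thesis unfolding w_def[symmetric]
  proof (rule filterlim_at_top_mono[OF \<open>filterlim (\<lambda>t. (1 / norm ws) * g t) at_top sequentially\<close>])
    show "\<forall>\<^sub>F t in sequentially. (1 / norm ws) * g t \<le> norm (w t)"
    proof (intro always_eventually allI)
      fix t
      have "g t \<le> norm ws * norm (w t)" unfolding g_def by (rule abs_le_D1[OF Cauchy_Schwarz_ineq2])
      thus "(1 / norm ws) * g t \<le> norm (w t)" using ws_ne by (simp add: field_simps mult.commute)
    qed
  qed
qed

theorem lemma1: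
  fixes x :: "nat \<Rightarrow> real ^ 'd"
    and N B K :: nat
    and l l' :: "real \<Rightarrow> real"
    and beta eta :: real
  assumes N_pos: "0 < N"
    and sep: "\<exists>w_star :: real ^ 'd. \<forall>n\<in>{1..N}. w_star \<bullet> x n > 0"
    and l_pos: "\<forall>u. l u > 0"
    and l_deriv: "\<forall>u. (l has_real_derivative l' u) (at u)"
    and l'_lip: "\<forall>u v. \<bar>l' u - l' v\<bar> \<le> beta * \<bar>u - v\<bar>"
    and l'_neg: "\<forall>u. l' u < 0"
    and l_lim: "(l \<longlongrightarrow> 0) at_top"
    and l'_lim: "(l' \<longlongrightarrow> 0) at_top"
    and l'_limsup: "Limsup at_bot (\<lambda>u. ereal (l' u)) \<noteq> 0"
    and eta_pos: "eta > 0"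
    and B_pos: "0 < B"
    and K_def: "N = K * B"
  shows
    \<comment> \<open>sampling without replacement: every (even adversarial) epoch-partitioning order\<close>
    "(\<forall>(w0 :: real ^ 'd) (Bt :: nat \<Rightarrow> nat set).
        (\<forall>t. Bt t \<in> minibatches N B) \<longrightarrow>
        (\<forall>u. (\<Union>k<K. Bt (K * u + k)) = {1..N}) \<longrightarrow>
        filterlim (\<lambda>t. norm (sgd_iter eta B l' x w0 Bt t)) at_top sequentially)
     \<and>
    \<comment> \<open>random sampling with replacement: i.i.d. uniform minibatches, almost surely\<close>
     (\<forall>(w0 :: real ^ 'd).
        AE \<omega> in stream_space (measure_pmf (pmf_of_set (minibatches N B))).
          filterlim (\<lambda>t. norm (sgd_iter eta B l' x w0 (\<lambda>t. \<omega> !! t) t)) at_top sequentially)"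
proof (intro conjI allI impI)
  fix w0 :: "real ^ 'd" and Bt :: "nat \<Rightarrow> nat set"
  assume "\<forall>t. Bt t \<in> minibatches N B"
  thus "filterlim (\<lambda>t. norm (sgd_iter eta B l' x w0 Bt t)) at_top sequentially"
    using det_part[OF N_pos sep l'_lip l'_neg eta_pos B_pos] by blast
next
  fix w0 :: "real ^ 'd"
  define M where "M = minibatches N B"
  have fin: "finite M" unfolding M_def minibatches_def
    by (rule finite_subset[of _ "Pow {1..N}"]) auto
  have "K > 0" using N_pos K_def by (cases K) auto
  hence "B \<le> N" using K_def by simp
  have ne: "M \<noteq> {}"
  proof -
    have "{1..B} \<in> M" unfolding M_def minibatches_def using \<open>B \<le> N\<close> by auto
    thus ?thesis by blast
  qed
  have set_eq: "set_pmf (pmf_of_set M) = M" using fin ne by simp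
  have "AE \<omega> in stream_space (measure_pmf (pmf_of_set M)). stream_all (\<lambda>S. S \<in> M) \<omega>"
  proof (rule prob_space.AE_stream_all[OF prob_space_measure_pmf])
    show "Measurable.pred (measure_pmf (pmf_of_set M)) (\<lambda>S. S \<in> M)"
      by (simp add: measurable_def)
    show "AE S in measure_pmf (pmf_of_set M). S \<in> M"
      using AE_measure_pmf[of "pmf_of_set M"] unfolding set_eq .
  qed
  thus "AE \<omega> in stream_space (measure_pmf (pmf_of_set (minibatches N B))).
          filterlim (\<lambda>t. norm (sgd_iter eta B l' x w0 (\<lambda>t. \<omega> !! t) t)) at_top sequentially"
    unfolding M_def[symmetric]
  proof (rule eventually_mono)
    fix \<omega> assume "stream_all (\<lambda>S. S \<in> M) \<omega>"
    hence "\<forall>t. \<omega> !! t \<in> minibatches N B" unfolding M_def stream_all_def by simp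
    thus "filterlim (\<lambda>t. norm (sgd_iter eta B l' x w0 (\<lambda>t. \<omega> !! t) t)) at_top sequentially"
      using det_part[OF N_pos sep l'_lip l'_neg eta_pos B_pos] by blast
  qed
qed

end
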